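(* In the two-valued atomic model under the Shapley scheme, consider a winning pool $S$ consisting of one large player (player $1$, stake $a$) and $k$ small players (stake $1$). If $k<h$, then $\phi_1(S)=\frac{k-h+a+1}{k+1}$ and each small player in $S$ receives $\frac{h-a}{k(k+1)}$. If $k\ge h$, then $\phi_1(S)=\frac{a}{k+1}$ and each small player in $S$ receives $\frac{k+1-a}{k(k+1)}$.
   Context: Atomic model with threshold $h$; every player has stake either $1$ (small) or $a$ (large), where $h,a$ are integers with $2\le a\le h-1$. A pool $S$ has reward $\rho(S)=1$ if its total stake is at least $h$ (winning) and $0$ otherwise. Shapley scheme: player $i$ in pool $S$ receives $\phi_i(S)=\sum_{T\subseteq S\setminus\{i\}}\frac{|T|!(|S|-|T|-1)!}{|S|!}(\rho(T\cup\{i\})-\rho(T))$. *)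

theory Defs
  imports Main Complex_Main
begin

definition stake :: "('a \<Rightarrow> nat) \<Rightarrow> 'a set \<Rightarrow> nat" where
  "stake w T = (\<Sum>i\<in>T. w i)"

definition rho :: "nat \<Rightarrow> ('a \<Rightarrow> nat) \<Rightarrow> 'a set \<Rightarrow> real" where
  "rho h w T = (if stake w T \<ge> h then 1 else 0)"

definition shapley :: "nat \<Rightarrow> ('a \<Rightarrow> nat) \<Rightarrow> 'a set \<Rightarrow> 'a \<Rightarrow> real" where
  "shapley h w S i = (\<Sum>T\<in>Pow (S - {i}).
      (fact (card T) * fact (card S - card T - 1) / fact (card S))
      * (rho h w (insert i T) - rho h w T))"

end

theory Submission imports Defs begin
lemma w1: "t \<le> m \<Longrightarrow> real (m choose t) * (fact t * fact (m - t) / fact (Suc m)) = 1/(real m+1)"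
proof -
  assume "t \<le> m"
  moreover have "fact m * (real m + 1) \<noteq> 0" by (simp add: add_nonneg_eq_0_iff)
  ultimately show ?thesis by (simp add: binomial_fact fact_Suc field_simps)
qed
lemma w2: assumes "t \<le> m" shows "real (m choose t) * (fact t * fact (Suc m - t) / fact (Suc (Suc m))) = (real m + 1 - real t)/((real m+1)*(real m+2))"
proof -
  have e: "Suc m - t = Suc (m - t)" using assms by simp
  show ?thesis using assms unfolding e by (simp add: binomial_fact fact_Suc field_simps fact_nonzero of_nat_diff add_nonneg_eq_0_iff)
qed
lemma w3: assumes "t \<le> m" shows "real (m choose t) * (fact (Suc t) * fact (m - t) / fact (Suc (Suc m))) = (real t + 1)/((real m+1)*(real m+2))"
  using assms by (simp add: binomial_fact fact_Suc field_simps fact_nonzero of_nat_diff add_nonneg_eq_0_iff)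
lemma sum_pow_card:
  fixes f :: "nat \<Rightarrow> real"
  assumes "finite A"
  shows "(\<Sum>T\<in>Pow A. f (card T)) = (\<Sum>t\<le>card A. real (card A choose t) * f t)"
proof -
  have "(\<Sum>T\<in>Pow A. f (card T)) = (\<Sum>t\<in>{..card A}. \<Sum>T\<in>{T\<in>Pow A. card T = t}. f (card T))"
    by (rule sum.group[symmetric]) (auto simp: assms card_mono)
  also have "\<dots> = (\<Sum>t\<le>card A. real (card A choose t) * f t)"
  proof (rule sum.cong[OF refl])
    fix t assume "t \<in> {..card A}"
    have "(\<Sum>T\<in>{T\<in>Pow A. card T = t}. f (card T)) = (\<Sum>T\<in>{T\<in>Pow A. card T = t}. f t)" by simp
    also have "\<dots> = real (card {T\<in>Pow A. card T = t}) * f t" by simp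
    also have "{T\<in>Pow A. card T = t} = {B. B \<subseteq> A \<and> card B = t}" by auto
    finally show "(\<Sum>T\<in>{T\<in>Pow A. card T = t}. f (card T)) = real (card A choose t) * f t"
      using n_subsets[OF assms] by simp
  qed
  finally show ?thesis .
qed

lemma sum_ind_card:
  fixes c :: real and k :: nat
  shows "(\<Sum>t\<le>k. c * (if P t then 1 else 0)) = c * real (card {t\<in>{..k}. P t})"
proof -
  have "(\<Sum>t\<le>k. c * (if P t then 1 else 0)) = (\<Sum>t\<le>k. if P t then c else 0)"
    by (rule sum.cong) auto
  also have "\<dots> = (\<Sum>t\<in>{t\<in>{..k}. P t}. c)" by (rule sum.inter_filter[symmetric]) simp
  finally show ?thesis by simp
qed

theorem lemma3p7:
  fixes h a k :: nat and w :: "'a \<Rightarrow> nat" and p :: 'a and K :: "'a set"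
  assumes ha: "2 \<le> a" "a \<le> h - 1"
    and two_valued: "\<forall>i. w i = 1 \<or> w i = a"
    and large: "w p = a"
    and small: "\<forall>j\<in>K. w j = 1"
    and fin: "finite K" and notin: "p \<notin> K" and cardK: "card K = k"
    and winning: "rho h w (insert p K) = 1"
  shows "(k < h \<longrightarrow> shapley h w (insert p K) p = (real k - real h + real a + 1) / (real k + 1)
              \<and> (\<forall>j\<in>K. shapley h w (insert p K) j = (real h - real a) / (real k * (real k + 1))))
       \<and> (h \<le> k \<longrightarrow> shapley h w (insert p K) p = real a / (real k + 1)
              \<and> (\<forall>j\<in>K. shapley h w (insert p K) j = (real k + 1 - real a) / (real k * (real k + 1))))"
proof -
  define S where "S = insert p K"
  have cardS: "card S = Suc k" using fin notin cardK by (simp add: S_def)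
  have stK: "stake w T = card T" if "T \<subseteq> K" for T
  proof -
    have "stake w T = (\<Sum>i\<in>T. 1)" unfolding stake_def using that small by (intro sum.cong) auto
    then show ?thesis by simp
  qed
  have stpK: "stake w (insert p T) = a + card T" if "T \<subseteq> K" for T
  proof -
    have "finite T" using that fin finite_subset by blast
    moreover have "p \<notin> T" using that notin by blast
    ultimately have "stake w (insert p T) = w p + stake w T" unfolding stake_def by simp
    then show ?thesis using stK[OF that] large by simp
  qed
  have rK: "rho h w T = (if h \<le> card T then 1 else 0)" if "T \<subseteq> K" for T
    using stK[OF that] by (simp add: rho_def)
  have rpK: "rho h w (insert p T) = (if h \<le> a + card T then 1 else 0)" if "T \<subseteq> K" for T
    using stpK[OF that] by (simp add: rho_def)
  have hak: "h \<le> a + k" using winning rpK[of K] cardK by (auto split: if_splits)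
  have h3: "3 \<le> h" using ha by simp
  have P: "shapley h w S p = real (card {t\<in>{..k}. h \<le> a + t \<and> \<not> h \<le> t}) / (real k + 1)"
  proof -
    have "shapley h w S p = (\<Sum>T\<in>Pow K. (\<lambda>t. fact t * fact (k - t) / fact (Suc k) *
        ((if h \<le> a + t then 1 else 0) - (if h \<le> t then 1 else 0))) (card T))"
      unfolding shapley_def cardS
      by (rule sum.cong) (auto simp: S_def notin rK rpK)
    also have "\<dots> = (\<Sum>t\<le>k. real (k choose t) * (fact t * fact (k - t) / fact (Suc k) *
        ((if h \<le> a + t then 1 else 0) - (if h \<le> t then 1 else 0))))"
      using sum_pow_card[OF fin, of "\<lambda>t. fact t * fact (k - t) / fact (Suc k) *
        ((if h \<le> a + t then 1 else 0) - (if h \<le> t then 1 else 0))"] by (simp only: cardK)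
    also have "\<dots> = (\<Sum>t\<le>k. (1 / (real k + 1)) * (if h \<le> a + t \<and> \<not> h \<le> t then 1 else 0))"
    proof (rule sum.cong[OF refl])
      fix t assume "t \<in> {..k}"
      then have "real (k choose t) * (fact t * fact (k - t) / fact (Suc k)) = 1 / (real k + 1)"
        using w1 by simp
      then show "real (k choose t) * (fact t * fact (k - t) / fact (Suc k) *
        ((if h \<le> a + t then 1 else 0) - (if h \<le> t then 1 else 0))) =
        (1 / (real k + 1)) * (if h \<le> a + t \<and> \<not> h \<le> t then 1 else 0)"
        by (auto simp: mult.assoc[symmetric])
    qed
    also have "\<dots> = (1 / (real k + 1)) * real (card {t\<in>{..k}. h \<le> a + t \<and> \<not> h \<le> t})"
      by (rule sum_ind_card)
    finally show ?thesis by simp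
  qed
  have setP: "{t\<in>{..k}. h \<le> a + t \<and> \<not> h \<le> t} = {h - a..min k (h - 1)}" using h3 by auto
  have J: "shapley h w S j = (if h - 1 \<le> k - 1 then (real k - real (h - 1)) / (real k * (real k + 1)) else 0)
       + (if h - a - 1 \<le> k - 1 then real (h - a) / (real k * (real k + 1)) else 0)" if j: "j \<in> K" for j
  proof -
    define K' where "K' = K - {j}"
    obtain m where km: "k = Suc m" using j fin cardK by (cases k) auto
    have cK': "card K' = m" using j fin cardK km by (simp add: K'_def)
    have fK': "finite K'" using fin by (simp add: K'_def)
    have pK': "p \<notin> K'" using notin by (simp add: K'_def)
    have Sj: "S - {j} = insert p K'" using j notin by (auto simp: S_def K'_def)
    define F where "F T = fact (card T) * fact (card S - card T - 1) / fact (card S) * (rho h w (insert j T) - rho h w T)" for T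
    have "shapley h w S j = (\<Sum>T\<in>Pow K' \<union> insert p ` Pow K'. F T)"
      unfolding shapley_def Sj Pow_insert F_def by simp
    also have "\<dots> = (\<Sum>T\<in>Pow K'. F T) + (\<Sum>T\<in>insert p ` Pow K'. F T)"
      by (rule sum.union_disjoint) (use fK' pK' in auto)
    also have "(\<Sum>T\<in>insert p ` Pow K'. F T) = (\<Sum>T\<in>Pow K'. F (insert p T))"
    proof (rule sum.reindex_cong[where l="insert p"])
      show "inj_on (insert p) (Pow K')" using pK' by (auto simp: inj_on_def)
    qed auto
    also have "(\<Sum>T\<in>Pow K'. F T) = (\<Sum>T\<in>Pow K'. (\<lambda>t. fact t * fact (Suc (Suc m) - t - 1) / fact (Suc (Suc m)) *
        ((if h \<le> Suc t then 1 else 0) - (if h \<le> t then 1 else 0))) (card T))"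
    proof (rule sum.cong[OF refl])
      fix T assume T: "T \<in> Pow K'"
      then have "T \<subseteq> K" "insert j T \<subseteq> K" "finite T" "j \<notin> T" using j fK' finite_subset by (auto simp: K'_def)
      then show "F T = fact (card T) * fact (Suc (Suc m) - card T - 1) / fact (Suc (Suc m)) *
        ((if h \<le> Suc (card T) then 1 else 0) - (if h \<le> card T then 1 else 0))" unfolding F_def cardS km using rK by simp
    qed
    also have "\<dots> = (\<Sum>t\<le>m. real (m choose t) * (fact t * fact (Suc (Suc m) - t - 1) / fact (Suc (Suc m)) *
        ((if h \<le> Suc t then 1 else 0) - (if h \<le> t then 1 else 0))))"
      using sum_pow_card[OF fK', of "\<lambda>t. fact t * fact (Suc (Suc m) - t - 1) / fact (Suc (Suc m)) *
        ((if h \<le> Suc t then 1 else 0) - (if h \<le> t then 1 else 0))"] by (simp only: cK')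
    also have "\<dots> = (\<Sum>t\<le>m. ((real m + 1 - real t)/((real m+1)*(real m+2))) * (if t = h - 1 then 1 else 0))"
    proof (rule sum.cong[OF refl])
      fix t assume t: "t \<in> {..m}"
      have "Suc (Suc m) - t - 1 = Suc m - t" by simp
      then have eq: "real (m choose t) * (fact t * fact (Suc (Suc m) - t - 1) / fact (Suc (Suc m))) = (real m + 1 - real t)/((real m+1)*(real m+2))"
        using w2[of t m] t by simp
      have c: "(if h \<le> Suc t then 1 else 0) - (if h \<le> t then 1 else 0) = (if t = h - 1 then 1 else (0::real))" using h3 by auto
      show "real (m choose t) * (fact t * fact (Suc (Suc m) - t - 1) / fact (Suc (Suc m)) *
        ((if h \<le> Suc t then 1 else 0) - (if h \<le> t then 1 else 0))) = ((real m + 1 - real t)/((real m+1)*(real m+2))) * (if t = h - 1 then 1 else 0)"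
        unfolding c by (metis eq mult.assoc)
    qed
    also have "(\<Sum>T\<in>Pow K'. F (insert p T)) = (\<Sum>T\<in>Pow K'. (\<lambda>t. fact (Suc t) * fact (m - t) / fact (Suc (Suc m)) *
        ((if h \<le> a + Suc t then 1 else 0) - (if h \<le> a + t then 1 else 0))) (card T))"
    proof (rule sum.cong[OF refl])
      fix T assume T: "T \<in> Pow K'"
      then have "T \<subseteq> K" "insert j T \<subseteq> K" "finite T" "j \<notin> T" "p \<notin> T" using j fK' pK' finite_subset by (auto simp: K'_def)
      then show "F (insert p T) = fact (Suc (card T)) * fact (m - card T) / fact (Suc (Suc m)) *
        ((if h \<le> a + Suc (card T) then 1 else 0) - (if h \<le> a + card T then 1 else 0))" unfolding F_def cardS km using rpK[of T] rpK[of "insert j T"] notin j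
        by (simp add: insert_commute)
    qed
    also have "\<dots> = (\<Sum>t\<le>m. real (m choose t) * (fact (Suc t) * fact (m - t) / fact (Suc (Suc m)) *
        ((if h \<le> a + Suc t then 1 else 0) - (if h \<le> a + t then 1 else 0))))"
      using sum_pow_card[OF fK', of "\<lambda>t. fact (Suc t) * fact (m - t) / fact (Suc (Suc m)) *
        ((if h \<le> a + Suc t then 1 else 0) - (if h \<le> a + t then 1 else 0))"] by (simp only: cK')
    also have "\<dots> = (\<Sum>t\<le>m. ((real t + 1)/((real m+1)*(real m+2))) * (if t = h - a - 1 then 1 else 0))"
    proof (rule sum.cong[OF refl])
      fix t assume t: "t \<in> {..m}"
      have eq: "real (m choose t) * (fact (Suc t) * fact (m - t) / fact (Suc (Suc m))) = (real t + 1)/((real m+1)*(real m+2))"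
        using w3[of t m] t by simp
      have c: "(if h \<le> a + Suc t then 1 else 0) - (if h \<le> a + t then 1 else 0) = (if t = h - a - 1 then 1 else (0::real))" using ha by auto
      show "real (m choose t) * (fact (Suc t) * fact (m - t) / fact (Suc (Suc m)) *
        ((if h \<le> a + Suc t then 1 else 0) - (if h \<le> a + t then 1 else 0))) = ((real t + 1)/((real m+1)*(real m+2))) * (if t = h - a - 1 then 1 else 0)"
        unfolding c by (metis eq mult.assoc)
    qed
    finally have "shapley h w S j = (if h - 1 \<le> m then (real m + 1 - real (h - 1))/((real m+1)*(real m+2)) else 0)
       + (if h - a - 1 \<le> m then (real (h - a - 1) + 1)/((real m+1)*(real m+2)) else 0)"
      by (simp add: if_distrib cong: if_cong)
    moreover have "real (h - a - 1) + 1 = real (h - a)" using ha by simp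
    ultimately show ?thesis using km by (simp add: algebra_simps)
  qed
  show ?thesis
  proof (intro conjI impI)
    assume "k < h"
    then show "shapley h w (insert p K) p = (real k - real h + real a + 1) / (real k + 1)"
      using P setP hak ha unfolding S_def by (simp add: of_nat_diff)
    show "\<forall>j\<in>K. shapley h w (insert p K) j = (real h - real a) / (real k * (real k + 1))"
    proof
      fix j assume j: "j \<in> K"
      then have "k \<ge> 1" using fin cardK by (cases k) auto
      then have c1: "\<not> h - 1 \<le> k - 1" and c2: "h - a - 1 \<le> k - 1" using \<open>k < h\<close> hak by auto
      have "real (h - a) = real h - real a" using ha by (simp add: of_nat_diff)
      then show "shapley h w (insert p K) j = (real h - real a) / (real k * (real k + 1))"
        using J[OF j] c1 c2 unfolding S_def by simp
    qed
  next
    assume "h \<le> k"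
    then show "shapley h w (insert p K) p = real a / (real k + 1)"
      using P setP hak ha unfolding S_def by (simp add: of_nat_diff)
    show "\<forall>j\<in>K. shapley h w (insert p K) j = (real k + 1 - real a) / (real k * (real k + 1))"
    proof
      fix j assume j: "j \<in> K"
      have c1: "h - 1 \<le> k - 1" and c2: "h - a - 1 \<le> k - 1" using \<open>h \<le> k\<close> ha by auto
      have "real (h - a) = real h - real a" using ha by (simp add: of_nat_diff)
      moreover have "real (h - 1) = real h - 1" using ha by (simp add: of_nat_diff)
      ultimately show "shapley h w (insert p K) j = (real k + 1 - real a) / (real k * (real k + 1))"
        using J[OF j] c1 c2 unfolding S_def by (simp add: add_divide_distrib[symmetric])
    qed
  qed
qed
end
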